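(* Let $F$ be a field with valuation $v:F\to\mathbb{R}\cup\{\infty\}$ whose value group is a proper dense subgroup of $\mathbb{R}$, $R=\{x\in F:v(x)\ge0\}$, $U=\{f\in R[[X]]:v_0(f)=0\}$ and $T=R[[X]]_U$. Then $R[[X]]$ is a pure $R$-submodule of $T$, and more generally for any index set $I$ the direct product $R[[X]]^I$ is a pure $R$-submodule of $T^I$.
   Context: $v_0\big(\sum_n s_nX^n\big)=\inf\{v(s_n):n\in\mathbb{N}\}$ (a valuation on $R[[X]]$). For a commutative ring $S$ and $S$-module $M$, a submodule $N\subseteq M$ is pure if for every $S$-module $L$ the natural map $N\otimes_S L\to M\otimes_S L$ is injective. *)

theory Defs
  imports Complex_Main "HOL-Library.Extended_Real" "HOL-Library.Function_Algebras"
    "HOL-Computational_Algebra.Formal_Laurent_Series"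
begin

definition valuation :: "('a::field \<Rightarrow> ereal) \<Rightarrow> bool" where
  "valuation v \<longleftrightarrow>
     (\<forall>x. v x \<noteq> -\<infinity>) \<and>
     (\<forall>x. v x = \<infinity> \<longleftrightarrow> x = 0) \<and>
     (\<forall>x y. v (x * y) = v x + v y) \<and>
     (\<forall>x y. min (v x) (v y) \<le> v (x + y))"

definition value_group :: "('a::field \<Rightarrow> ereal) \<Rightarrow> real set" where
  "value_group v = {r. \<exists>x. x \<noteq> 0 \<and> v x = ereal r}"

definition dense_in_reals :: "real set \<Rightarrow> bool" where
  "dense_in_reals G \<longleftrightarrow> (\<forall>a b. a < b \<longrightarrow> (\<exists>g\<in>G. a < g \<and> g < b))"

definition val_ring :: "('a::field \<Rightarrow> ereal) \<Rightarrow> 'a set" where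
  "val_ring v = {x. 0 \<le> v x}"

definition val_fps :: "('a::field \<Rightarrow> ereal) \<Rightarrow> 'a fps set" where
  "val_fps v = {f. \<forall>n. fps_nth f n \<in> val_ring v}"

definition v0 :: "('a::field \<Rightarrow> ereal) \<Rightarrow> 'a fps \<Rightarrow> ereal" where
  "v0 v f = (INF n. v (fps_nth f n))"

definition U_set :: "('a::field \<Rightarrow> ereal) \<Rightarrow> 'a fps set" where
  "U_set v = {f \<in> val_fps v. v0 v f = 0}"

text \<open>T = R[[X]]_U, realised inside the fraction field F((X)) of the domain R[[X]] \<subseteq> F[[X]].\<close>
definition T_set :: "('a::field \<Rightarrow> ereal) \<Rightarrow> 'a fls set" where
  "T_set v = {fps_to_fls f / fps_to_fls u | f u. f \<in> val_fps v \<and> u \<in> U_set v}"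

definition RX_set :: "('a::field \<Rightarrow> ereal) \<Rightarrow> 'a fls set" where
  "RX_set v = fps_to_fls ` val_fps v"

definition module_on :: "'a::comm_ring_1 set \<Rightarrow> 'm::ab_group_add set \<Rightarrow> ('a \<Rightarrow> 'm \<Rightarrow> 'm) \<Rightarrow> bool" where
  "module_on R Mc sm \<longleftrightarrow>
     0 \<in> Mc \<and> (\<forall>x\<in>Mc. \<forall>y\<in>Mc. x + y \<in> Mc) \<and> (\<forall>x\<in>Mc. - x \<in> Mc) \<and>
     (\<forall>r\<in>R. \<forall>x\<in>Mc. sm r x \<in> Mc) \<and>
     (\<forall>r\<in>R. \<forall>x\<in>Mc. \<forall>y\<in>Mc. sm r (x + y) = sm r x + sm r y) \<and>
     (\<forall>r\<in>R. \<forall>s\<in>R. \<forall>x\<in>Mc. sm (r + s) x = sm r x + sm s x) \<and>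
     (\<forall>r\<in>R. \<forall>s\<in>R. \<forall>x\<in>Mc. sm (r * s) x = sm r (sm s x)) \<and>
     (\<forall>x\<in>Mc. sm 1 x = x)"

definition submodule_on :: "'a::comm_ring_1 set \<Rightarrow> 'm::ab_group_add set \<Rightarrow> 'm set \<Rightarrow> ('a \<Rightarrow> 'm \<Rightarrow> 'm) \<Rightarrow> bool" where
  "submodule_on R Nc Mc sm \<longleftrightarrow> Nc \<subseteq> Mc \<and> module_on R Mc sm \<and> module_on R Nc sm"

text \<open>Formal Z-linear combinations of pairs: the free abelian group on M x L.\<close>
definition delta :: "'p \<Rightarrow> 'p \<Rightarrow> int" where
  "delta p = (\<lambda>q. if q = p then 1 else 0)"

definition tensor_rels ::
  "'a::comm_ring_1 set \<Rightarrow> 'm::ab_group_add set \<Rightarrow> ('a \<Rightarrow> 'm \<Rightarrow> 'm) \<Rightarrow>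
   'l::ab_group_add set \<Rightarrow> ('a \<Rightarrow> 'l \<Rightarrow> 'l) \<Rightarrow> ('m \<times> 'l \<Rightarrow> int) set" where
  "tensor_rels R Mc sm Lc sl =
     {delta (m + m', l) - delta (m, l) - delta (m', l) | m m' l. m \<in> Mc \<and> m' \<in> Mc \<and> l \<in> Lc} \<union>
     {delta (m, l + l') - delta (m, l) - delta (m, l') | m l l'. m \<in> Mc \<and> l \<in> Lc \<and> l' \<in> Lc} \<union>
     {delta (sm r m, l) - delta (m, sl r l) | r m l. r \<in> R \<and> m \<in> Mc \<and> l \<in> Lc}"

inductive_set zspan :: "'g::ab_group_add set \<Rightarrow> 'g set" for S where
  zspan_zero: "0 \<in> zspan S"
| zspan_gen: "s \<in> S \<Longrightarrow> s \<in> zspan S"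
| zspan_diff: "a \<in> zspan S \<Longrightarrow> b \<in> zspan S \<Longrightarrow> a - b \<in> zspan S"

text \<open>The element sum of m_i \<otimes> l_i (for the list xs of pairs (m_i,l_i)) is zero in M \<otimes>_R L.\<close>
definition tensor_zero ::
  "'a::comm_ring_1 set \<Rightarrow> 'm::ab_group_add set \<Rightarrow> ('a \<Rightarrow> 'm \<Rightarrow> 'm) \<Rightarrow>
   'l::ab_group_add set \<Rightarrow> ('a \<Rightarrow> 'l \<Rightarrow> 'l) \<Rightarrow> ('m \<times> 'l) list \<Rightarrow> bool" where
  "tensor_zero R Mc sm Lc sl xs \<longleftrightarrow>
     (\<Sum>p\<leftarrow>xs. delta p) \<in> zspan (tensor_rels R Mc sm Lc sl)"

text \<open>The natural map N \<otimes>_R L \<rightarrow> M \<otimes>_R L is injective: every element of N \<otimes> L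
  (a finite sum of simple tensors) that vanishes in M \<otimes> L already vanishes in N \<otimes> L.\<close>
definition tensor_map_injective ::
  "'a::comm_ring_1 set \<Rightarrow> 'm::ab_group_add set \<Rightarrow> 'm set \<Rightarrow> ('a \<Rightarrow> 'm \<Rightarrow> 'm) \<Rightarrow>
   'l::ab_group_add set \<Rightarrow> ('a \<Rightarrow> 'l \<Rightarrow> 'l) \<Rightarrow> bool" where
  "tensor_map_injective R Nc Mc sm Lc sl \<longleftrightarrow>
     (\<forall>xs. set xs \<subseteq> Nc \<times> Lc \<longrightarrow> tensor_zero R Mc sm Lc sl xs \<longrightarrow> tensor_zero R Nc sm Lc sl xs)"

definition fls_smult :: "'a::field \<Rightarrow> 'a fls \<Rightarrow> 'a fls" where
  "fls_smult r f = fls_const r * f"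

definition fam_smult :: "'a::field \<Rightarrow> ('i \<Rightarrow> 'a fls) \<Rightarrow> ('i \<Rightarrow> 'a fls)" where
  "fam_smult r f = (\<lambda>i. fls_const r * f i)"

definition fam_prod :: "'i set \<Rightarrow> 'b::zero set \<Rightarrow> ('i \<Rightarrow> 'b) set" where
  "fam_prod I A = {f. (\<forall>i\<in>I. f i \<in> A) \<and> (\<forall>i. i \<notin> I \<longrightarrow> f i = 0)}"

end

theory Submission
  imports Defs
begin

lemma ereal_strict_add:
  fixes a b c d :: ereal
  assumes "a < c" "b \<le> d" "0 \<le> a" "0 \<le> b" "b < \<infinity>"
  shows "a + b < c + d"
  using assms by (cases a; cases b; cases c; cases d) auto

locale valu = fixes v :: "'a::field \<Rightarrow> ereal" assumes V: "valuation v"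
begin

lemma vnm: "v x \<noteq> -\<infinity>" using V by (simp add: valuation_def)
lemma vinf: "v x = \<infinity> \<longleftrightarrow> x = 0" using V by (simp add: valuation_def)
lemma vmult: "v (x * y) = v x + v y" using V by (simp add: valuation_def)
lemma vadd: "min (v x) (v y) \<le> v (x + y)" using V by (simp add: valuation_def)

lemma vfin: "x \<noteq> 0 \<Longrightarrow> \<bar>v x\<bar> \<noteq> \<infinity>"
  using vnm[of x] vinf[of x] by (cases "v x") auto

lemma v0: "v 0 = \<infinity>" using vinf by simp

lemma v1: "v 1 = 0"
proof -
  have "v 1 = v 1 + v 1" using vmult[of 1 1] by simp
  moreover have "\<bar>v 1\<bar> \<noteq> \<infinity>" using vfin[of 1] by simp
  ultimately show ?thesis by (cases "v 1") auto
qed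

lemma vm1: "v (-1) = 0"
proof -
  have "0 = v (-1) + v (-1)" using vmult[of "-1" "-1"] v1 by simp
  moreover have "\<bar>v (-1)\<bar> \<noteq> \<infinity>" using vfin[of "-1"] by simp
  ultimately show ?thesis by (cases "v (-1)") auto
qed

lemma vneg: "v (- x) = v x"
  using vmult[of "-1" x] vm1 by simp

lemma vadd_eq: assumes "v x < v y" shows "v (x + y) = v x"
proof -
  have a: "v x \<le> v (x + y)" using vadd[of x y] assms by simp
  have "min (v (x+y)) (v (-y)) \<le> v (x + y + - y)" by (rule vadd)
  hence "min (v (x+y)) (v y) \<le> v x" by (simp add: vneg)
  thus ?thesis using a assms by (auto simp: min_def split: if_splits)
qed

lemma vdiv: assumes "a \<noteq> 0" shows "v (b / a) = v b - v a"
proof -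
  have "v b = v (b / a) + v a" using vmult[of "b/a" a] assms by simp
  moreover have "\<bar>v a\<bar> \<noteq> \<infinity>" using vfin assms by simp
  ultimately show ?thesis by (cases "v a"; cases "v (b/a)") auto
qed

lemma ring0: "0 \<in> val_ring v" by (simp add: val_ring_def v0)
lemma ring1: "1 \<in> val_ring v" by (simp add: val_ring_def v1)
lemma ring_add: "x \<in> val_ring v \<Longrightarrow> y \<in> val_ring v \<Longrightarrow> x + y \<in> val_ring v"
  using vadd[of x y] by (auto simp: val_ring_def min_def split: if_splits)
lemma ring_mult: "x \<in> val_ring v \<Longrightarrow> y \<in> val_ring v \<Longrightarrow> x * y \<in> val_ring v"
  by (auto simp: val_ring_def vmult)
lemma ring_neg: "x \<in> val_ring v \<Longrightarrow> - x \<in> val_ring v"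
  by (auto simp: val_ring_def vneg)
lemma ring_diff: "x \<in> val_ring v \<Longrightarrow> y \<in> val_ring v \<Longrightarrow> x - y \<in> val_ring v"
  using ring_add[of x "-y"] ring_neg[of y] by simp
lemma ring_sum: "(\<And>i. i \<in> A \<Longrightarrow> f i \<in> val_ring v) \<Longrightarrow> sum f A \<in> val_ring v"
  by (induction A rule: infinite_finite_induct) (auto intro: ring0 ring_add)
lemma ring_divI: "a \<noteq> 0 \<Longrightarrow> v a \<le> v b \<Longrightarrow> b / a \<in> val_ring v"
  using vdiv[of a b] vfin[of a] by (cases "v a"; cases "v b") (auto simp: val_ring_def)

lemma min_index:
  fixes F :: "nat \<Rightarrow> ereal" and s :: real
  assumes s: "s > 0" and lb: "\<And>i. ereal (real i * s) \<le> F i" and fn: "F n < \<infinity>"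
  shows "\<exists>p. F p \<le> F n \<and> (\<forall>i. F p \<le> F i) \<and> (\<forall>i>p. F p < F i)"
proof -
  have "ereal 0 \<le> ereal (real n * s)" using s by simp
  hence "ereal 0 \<le> F n" using lb[of n] by (rule order_trans)
  then obtain r where r: "F n = ereal r" using fn by (cases "F n") auto
  obtain B :: nat where B: "r < real B * s"
  proof -
    obtain B :: nat where "r / s < real B" using reals_Archimedean2 by blast
    thus ?thesis using that s by (simp add: divide_less_eq)
  qed
  have big: "F n < F i" if "i > B" for i
  proof -
    have "real B * s < real i * s" using that s by simp
    hence "F n < ereal (real i * s)" using B r by simp
    thus ?thesis using lb[of i] by simp
  qed
  have nB: "n \<le> B" using big[of n] by (cases "n \<le> B") auto
  define a where "a = Min (F ` {..B})"
  have a_le: "a \<le> F i" if "i \<le> B" for i unfolding a_def using that by simp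
  have a_in: "a \<in> F ` {..B}" unfolding a_def by (rule Min_in) auto
  define P where "P = {i. i \<le> B \<and> F i = a}"
  have Pfin: "finite P" unfolding P_def by simp
  have Pne: "P \<noteq> {}" using a_in unfolding P_def by auto
  define p where "p = Max P"
  have pP: "p \<in> P" unfolding p_def using Pfin Pne by (rule Max_in)
  hence Fp: "F p = a" "p \<le> B" unfolding P_def by auto
  have an: "a \<le> F n" using a_le nB by simp
  show ?thesis
  proof (intro exI conjI allI impI)
    show "F p \<le> F n" using Fp an by simp
    fix i
    show "F p \<le> F i"
      using Fp a_le[of i] big[of i] an by (cases "i \<le> B") auto
  next
    fix i assume ip: "i > p"
    show "F p < F i"
    proof (cases "i \<le> B")
      case True
      have "i \<notin> P" using ip Pfin unfolding p_def using Max_ge leD by blast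
      hence "F i \<noteq> a" using True unfolding P_def by auto
      thus ?thesis using a_le[OF True] Fp by simp
    next
      case False thus ?thesis using big[of i] an Fp by simp
    qed
  qed
qed

lemma vsum_gt:
  assumes "finite A" "c < \<infinity>" "\<And>i. i \<in> A \<Longrightarrow> c < v (f i)"
  shows "c < v (sum f A)"
  using assms
proof (induction A rule: finite_induct)
  case empty thus ?case by (simp add: v0)
next
  case (insert x A)
  have "c < min (v (f x)) (v (sum f A))" using insert by simp
  also have "\<dots> \<le> v (f x + sum f A)" by (rule vadd)
  finally show ?case using insert by simp
qed

lemma vfps_nonneg: "f \<in> val_fps v \<Longrightarrow> 0 \<le> v (f $ n)"
  by (simp add: val_fps_def val_ring_def)

lemma gauss_s:
  assumes f: "f \<in> val_fps v" and g: "g \<in> val_fps v" and s: "s > 0"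
    and fn: "v (f $ n) < \<infinity>" and gm: "v (g $ m) < \<infinity>"
  shows "\<exists>k. v ((f * g) $ k) \<le> v (f $ n) + v (g $ m) + ereal (real (n + m) * s)"
proof -
  define F where "F i = v (f $ i) + ereal (real i * s)" for i
  define G where "G i = v (g $ i) + ereal (real i * s)" for i
  have lbF: "ereal (real i * s) \<le> F i" for i
    unfolding F_def using vfps_nonneg[OF f, of i] add_mono[of 0 "v (f$i)"] by (metis add.left_neutral order_refl)
  have lbG: "ereal (real i * s) \<le> G i" for i
    unfolding G_def using vfps_nonneg[OF g, of i] add_mono[of 0 "v (g$i)"] by (metis add.left_neutral order_refl)
  have Fn: "F n < \<infinity>" unfolding F_def using fn by simp
  have Gm: "G m < \<infinity>" unfolding G_def using gm by simp
  obtain p where p: "F p \<le> F n" "\<And>i. F p \<le> F i" "\<And>i. i > p \<Longrightarrow> F p < F i"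
    using min_index[OF s lbF Fn] by blast
  obtain q where q: "G q \<le> G m" "\<And>i. G q \<le> G i" "\<And>i. i > q \<Longrightarrow> G q < G i"
    using min_index[OF s lbG Gm] by blast
  have Fpfin: "F p < \<infinity>" using le_less_trans[OF p(1) Fn] .
  have Gqfin: "G q < \<infinity>" using le_less_trans[OF q(1) Gm] .
  have Fp0: "0 \<le> F p" using lbF[of p] s by (metis mult_nonneg_nonneg of_nat_0_le_iff order_less_imp_le order_trans zero_ereal_def ereal_less_eq(3))
  have Gq0: "0 \<le> G q" using lbG[of q] s by (metis mult_nonneg_nonneg of_nat_0_le_iff order_less_imp_le order_trans zero_ereal_def ereal_less_eq(3))
  define k where "k = p + q"
  define c where "c = ereal (real k * s)"
  have key: "F i + G j = v (f$i) + v (g$j) + c" if "i + j = k" for i j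
  proof -
    have "ereal (real i * s) + ereal (real j * s) = c"
      unfolding c_def using that[symmetric] by (simp add: distrib_right)
    thus ?thesis unfolding F_def G_def by (metis add.assoc add.commute add.left_commute)
  qed
  have main_fin: "v (f$p) + v (g$q) < \<infinity>"
  proof -
    have "F p + G q < \<infinity>" using Fpfin Gqfin by simp
    thus ?thesis using key[of p q] unfolding k_def c_def by simp
  qed
  have cfin: "\<bar>c\<bar> \<noteq> \<infinity>" unfolding c_def by simp
  have strict: "v (f$p * g$q) < v (f$i * g$(k - i))" if "i \<le> k" "i \<noteq> p" for i
  proof -
    have "F p + G q < F i + G (k - i)"
    proof (cases "i > p")
      case True
      hence "k - i < q" using that unfolding k_def by simp
      hence "G q \<le> G (k - i)" using q(2) by simp
      moreover have "F p < F i" using p(3) True by simp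
      ultimately show ?thesis using Fpfin Gqfin Fp0 Gq0
        by (intro ereal_strict_add) auto
    next
      case False
      hence ip: "i < p" using that by simp
      hence "k - i > q" unfolding k_def by simp
      hence "G q < G (k - i)" using q(3) by simp
      moreover have "F p \<le> F i" using p(2) by simp
      ultimately show ?thesis using Fpfin Gqfin Fp0 Gq0
        using ereal_strict_add[of "G q" "G (k-i)" "F p" "F i"] by (simp add: add.commute)
    qed
    hence "v (f$p) + v (g$q) + c < v (f$i) + v (g$(k-i)) + c"
      using key[of p q] key[of i "k - i"] that unfolding k_def by simp
    hence "v (f$p) + v (g$q) < v (f$i) + v (g$(k-i))"
      using cfin by (metis ereal_add_le_add_iff2 not_le)
    thus ?thesis by (simp add: vmult)
  qed
  have coef: "(f * g) $ k = f$p * g$(k - p) + (\<Sum>i\<in>{0..k} - {p}. f$i * g$(k - i))"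
    unfolding fps_mult_nth by (subst sum.remove[of _ p]) (auto simp: k_def)
  have "v ((f * g) $ k) = v (f$p * g$q)"
  proof -
    have "v (f$p * g$q) < v (\<Sum>i\<in>{0..k} - {p}. f$i * g$(k - i))"
      by (rule vsum_gt) (use strict main_fin in \<open>auto simp: vmult\<close>)
    thus ?thesis unfolding coef using vadd_eq by (simp add: k_def)
  qed
  also have "\<dots> = v (f$p) + v (g$q)" by (simp add: vmult)
  also have "\<dots> \<le> v (f$p) + v (g$q) + c"
    unfolding c_def using s by (simp add: add_increasing2)
  also have "\<dots> = F p + G q" using key[of p q] k_def by simp
  also have "\<dots> \<le> F n + G m" using p(1) q(1) by (rule add_mono)
  also have "\<dots> = v (f $ n) + v (g $ m) + ereal (real (n + m) * s)"
    unfolding F_def G_def by (simp add: distrib_right distrib_left ac_simps)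
  finally show ?thesis by blast
qed

lemma gauss_nm:
  assumes f: "f \<in> val_fps v" and g: "g \<in> val_fps v"
  shows "v0 v (f * g) \<le> v (f $ n) + v (g $ m)"
proof (cases "v (f $ n) = \<infinity> \<or> v (g $ m) = \<infinity>")
  case True
  thus ?thesis using vfps_nonneg[OF f, of n] vfps_nonneg[OF g, of m] by auto
next
  case False
  hence fn: "v (f $ n) < \<infinity>" and gm: "v (g $ m) < \<infinity>" by (auto simp: less_top[symmetric])
  show ?thesis
  proof (rule ereal_le_epsilon2)
    fix e :: real assume e: "0 < e"
    define s where "s = e / real (n + m + 1)"
    have s: "s > 0" unfolding s_def using e by simp
    obtain k where k: "v ((f * g) $ k) \<le> v (f $ n) + v (g $ m) + ereal (real (n + m) * s)"
      using gauss_s[OF f g s fn gm] by blast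
    have "real (n + m) * s \<le> e" unfolding s_def using e
      by (simp add: field_simps)
    hence "ereal (real (n + m) * s) \<le> ereal e" by simp
    have "v0 v (f * g) \<le> v ((f * g) $ k)" unfolding v0_def by (rule INF_lower) simp
    also have "\<dots> \<le> v (f $ n) + v (g $ m) + ereal (real (n + m) * s)" by (rule k)
    also have "\<dots> \<le> v (f $ n) + v (g $ m) + ereal e"
      using \<open>ereal (real (n + m) * s) \<le> ereal e\<close> by (rule add_left_mono)
    finally show "v0 v (f * g) \<le> v (f $ n) + v (g $ m) + ereal e" .
  qed
qed

lemma v0_nonneg: "f \<in> val_fps v \<Longrightarrow> 0 \<le> v0 v f"
  unfolding v0_def by (rule INF_greatest) (simp add: vfps_nonneg)

lemma gauss:
  assumes f: "f \<in> val_fps v" and g: "g \<in> val_fps v"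
  shows "v0 v (f * g) \<le> v0 v f + v0 v g"
proof -
  have "v0 v f + v0 v g = (INF n. v (f $ n) + v0 v g)"
    unfolding v0_def[of v f]
    by (rule INF_ereal_add_left[symmetric]) (use v0_nonneg[OF g] vfps_nonneg[OF f] in auto)
  also have "\<dots> = (INF n. INF m. v (f $ n) + v (g $ m))"
    unfolding v0_def[of v g]
    by (rule INF_cong[OF refl], rule INF_ereal_add_right[symmetric])
       (use vfps_nonneg[OF g] vnm in auto)
  finally have eq: "v0 v f + v0 v g = (INF n. INF m. v (f $ n) + v (g $ m))" .
  show ?thesis unfolding eq
    by (intro INF_greatest gauss_nm[OF f g])
qed


end

context valu
begin
lemma vfps_iff: "f \<in> val_fps v \<longleftrightarrow> (\<forall>n. f $ n \<in> val_ring v)"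
  by (simp add: val_fps_def)

lemma vfps_const: "r \<in> val_ring v \<Longrightarrow> fps_const r \<in> val_fps v"
  by (auto simp: vfps_iff ring0)
lemma vfps_0: "0 \<in> val_fps v" by (auto simp: vfps_iff ring0)
lemma vfps_1: "1 \<in> val_fps v" by (auto simp: vfps_iff ring0 ring1)
lemma vfps_add: "f \<in> val_fps v \<Longrightarrow> g \<in> val_fps v \<Longrightarrow> f + g \<in> val_fps v"
  by (auto simp: vfps_iff ring_add)
lemma vfps_neg: "f \<in> val_fps v \<Longrightarrow> - f \<in> val_fps v"
  by (auto simp: vfps_iff ring_neg)
lemma vfps_mult: "f \<in> val_fps v \<Longrightarrow> g \<in> val_fps v \<Longrightarrow> f * g \<in> val_fps v"
proof -
  assume f: "f \<in> val_fps v" and g: "g \<in> val_fps v"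
  show ?thesis unfolding vfps_iff fps_mult_nth
  proof
    fix n show "(\<Sum>i = 0..n. f $ i * g $ (n - i)) \<in> val_ring v"
      by (rule ring_sum, rule ring_mult) (use f g in \<open>auto simp: vfps_iff\<close>)
  qed
qed

lemma v0_one: "v0 v 1 = 0"
proof (rule antisym)
  have "v0 v 1 \<le> v ((1::'a fps) $ 0)" unfolding v0_def by (rule INF_lower) simp
  thus "v0 v 1 \<le> 0" using v1 by simp
  show "0 \<le> v0 v 1" by (rule v0_nonneg[OF vfps_1])
qed

lemma U_1: "1 \<in> U_set v" by (simp add: U_set_def vfps_1 v0_one)

lemma U_mult: assumes "u \<in> U_set v" "w \<in> U_set v" shows "u * w \<in> U_set v"
proof -
  have a: "u \<in> val_fps v" "w \<in> val_fps v" "v0 v u = 0" "v0 v w = 0" using assms by (auto simp: U_set_def)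
  have "v0 v (u * w) \<le> 0" using gauss[OF a(1,2)] a(3,4) by simp
  moreover have "0 \<le> v0 v (u * w)" by (rule v0_nonneg[OF vfps_mult[OF a(1,2)]])
  ultimately show ?thesis using a by (auto simp: U_set_def vfps_mult)
qed

lemma U_nz: assumes "u \<in> U_set v" shows "u \<noteq> 0"
proof
  assume "u = 0"
  hence "v0 v u = \<infinity>" unfolding v0_def by (simp add: v0)
  thus False using assms by (simp add: U_set_def)
qed

lemma T_iff: "t \<in> T_set v \<longleftrightarrow> (\<exists>f u. t = fps_to_fls f / fps_to_fls u \<and> f \<in> val_fps v \<and> u \<in> U_set v)"
  by (auto simp: T_set_def)

lemma RX_iff: "t \<in> RX_set v \<longleftrightarrow> (\<exists>f. t = fps_to_fls f \<and> f \<in> val_fps v)"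
  by (auto simp: RX_set_def)

lemma RX_T: "RX_set v \<subseteq> T_set v"
proof
  fix t assume "t \<in> RX_set v"
  then obtain f where "t = fps_to_fls f" "f \<in> val_fps v" by (auto simp: RX_iff)
  thus "t \<in> T_set v" unfolding T_iff using U_1 by (intro exI[of _ f] exI[of _ 1]) simp
qed


lemma T_add: assumes "x \<in> T_set v" "y \<in> T_set v" shows "x + y \<in> T_set v"
proof -
  obtain f u where x: "x = fps_to_fls f / fps_to_fls u" "f \<in> val_fps v" "u \<in> U_set v" using assms(1) by (auto simp: T_iff)
  obtain g w where y: "y = fps_to_fls g / fps_to_fls w" "g \<in> val_fps v" "w \<in> U_set v" using assms(2) by (auto simp: T_iff)
  have nz: "fps_to_fls u \<noteq> 0" "fps_to_fls w \<noteq> 0" using U_nz x(3) y(3) by auto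
  have uw: "u \<in> val_fps v" "w \<in> val_fps v" using x(3) y(3) by (auto simp: U_set_def)
  have "x + y = fps_to_fls (f * w + g * u) / fps_to_fls (u * w)"
    unfolding x y using nz by (simp add: fls_times_fps_to_fls add_frac_eq)
  moreover have "f * w + g * u \<in> val_fps v" using vfps_add vfps_mult x y uw by simp
  moreover have "u * w \<in> U_set v" using U_mult x y by simp
  ultimately show ?thesis unfolding T_iff by blast
qed

lemma T_neg: assumes "x \<in> T_set v" shows "- x \<in> T_set v"
proof -
  obtain f u where x: "x = fps_to_fls f / fps_to_fls u" "f \<in> val_fps v" "u \<in> U_set v" using assms(1) by (auto simp: T_iff)
  have "- x = fps_to_fls (- f) / fps_to_fls u" unfolding x by simp
  moreover have "- f \<in> val_fps v" using vfps_neg x by simp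
  ultimately show ?thesis unfolding T_iff using x by blast
qed

lemma T_smult: assumes "r \<in> val_ring v" "x \<in> T_set v" shows "fls_const r * x \<in> T_set v"
proof -
  obtain f u where x: "x = fps_to_fls f / fps_to_fls u" "f \<in> val_fps v" "u \<in> U_set v" using assms(2) by (auto simp: T_iff)
  have "fls_const r * x = fps_to_fls (fps_const r * f) / fps_to_fls u" unfolding x
    by (simp add: fls_times_fps_to_fls)
  moreover have "fps_const r * f \<in> val_fps v" using vfps_mult vfps_const assms(1) x by simp
  ultimately show ?thesis unfolding T_iff using x by blast
qed



lemma RX_add: assumes "x \<in> RX_set v" "y \<in> RX_set v" shows "x + y \<in> RX_set v"
proof -
  obtain f where f: "x = fps_to_fls f" "f \<in> val_fps v" using assms(1) unfolding RX_iff by blast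
  obtain g where g: "y = fps_to_fls g" "g \<in> val_fps v" using assms(2) unfolding RX_iff by blast
  have "x + y = fps_to_fls (f + g)" using f g by simp
  thus ?thesis unfolding RX_iff using vfps_add[OF f(2) g(2)] by blast
qed
lemma RX_neg: assumes "x \<in> RX_set v" shows "- x \<in> RX_set v"
proof -
  obtain f where f: "x = fps_to_fls f" "f \<in> val_fps v" using assms(1) unfolding RX_iff by blast
  have "- x = fps_to_fls (- f)" using f by simp
  thus ?thesis unfolding RX_iff using vfps_neg[OF f(2)] by blast
qed
lemma RX_smult: assumes "r \<in> val_ring v" "x \<in> RX_set v" shows "fls_const r * x \<in> RX_set v"
proof -
  obtain f where f: "x = fps_to_fls f" "f \<in> val_fps v" using assms(2) unfolding RX_iff by blast
  have "fls_const r * x = fps_to_fls (fps_const r * f)" using f by (simp add: fls_times_fps_to_fls)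
  thus ?thesis unfolding RX_iff using vfps_mult[OF vfps_const[OF assms(1)] f(2)] by blast
qed
lemma RX_0: "0 \<in> RX_set v"
  unfolding RX_iff using vfps_0 by (intro exI[of _ 0]) simp

lemma T_0: "0 \<in> T_set v" using RX_T RX_0 by blast

lemma module_fls:
  assumes "0 \<in> A" "\<And>x y. x \<in> A \<Longrightarrow> y \<in> A \<Longrightarrow> x + y \<in> A" "\<And>x. x \<in> A \<Longrightarrow> - x \<in> A"
    "\<And>r x. r \<in> val_ring v \<Longrightarrow> x \<in> A \<Longrightarrow> fls_const r * x \<in> A"
  shows "module_on (val_ring v) A fls_smult"
  unfolding module_on_def fls_smult_def
proof (intro conjI ballI)
  fix r s x assume "r \<in> val_ring v" "s \<in> val_ring v" "x \<in> A"
  show "fls_const (r + s) * x = fls_const r * x + fls_const s * x"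
    by (simp add: fls_plus_const[symmetric] distrib_right)
  show "fls_const (r * s) * x = fls_const r * (fls_const s * x)"
    by (simp add: mult.assoc[symmetric])
qed (use assms in \<open>auto simp: distrib_left\<close>)

lemma module_T: "module_on (val_ring v) (T_set v) fls_smult"
  by (rule module_fls) (auto intro: T_0 T_add T_neg T_smult)
lemma module_RX: "module_on (val_ring v) (RX_set v) fls_smult"
  by (rule module_fls) (auto intro: RX_0 RX_add RX_neg RX_smult)

lemma torsion_free:
  assumes r: "r \<in> val_ring v" "r \<noteq> 0" and t: "t \<in> T_set v" and rt: "fls_const r * t \<in> RX_set v"
  shows "t \<in> RX_set v"
proof -
  obtain f u where x: "t = fps_to_fls f / fps_to_fls u" "f \<in> val_fps v" "u \<in> U_set v" using t by (auto simp: T_iff)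
  obtain g where g: "fls_const r * t = fps_to_fls g" "g \<in> val_fps v" using rt by (auto simp: RX_iff)
  have uu: "u \<in> val_fps v" "v0 v u = 0" using x(3) by (auto simp: U_set_def)
  have nz: "fps_to_fls u \<noteq> 0" using U_nz x(3) by auto
  have tU: "t * fps_to_fls u = fps_to_fls f" using nz unfolding x by simp
  have "fps_to_fls (fps_const r * f) = fls_const r * t * fps_to_fls u"
    by (simp add: fls_times_fps_to_fls tU mult.assoc)
  also have "\<dots> = fps_to_fls (g * u)" by (simp add: g(1) fls_times_fps_to_fls)
  finally have "fps_to_fls (fps_const r * f) = fps_to_fls (g * u)" .
  hence eq: "fps_const r * f = g * u" by simp
  have "v r \<le> v0 v (fps_const r * f)"
    unfolding v0_def
  proof (rule INF_greatest)
    fix n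
    have "v r \<le> v r + v (f $ n)" using vfps_nonneg[OF x(2), of n] by (simp add: add_increasing2)
    thus "v r \<le> v ((fps_const r * f) $ n)" by (simp add: vmult)
  qed
  also have "\<dots> \<le> v0 v g" unfolding eq using gauss[OF g(2) uu(1)] uu(2) by simp
  finally have vg: "v r \<le> v0 v g" .
  have tg: "t = fps_to_fls (fps_const (1 / r) * g)"
  proof -
    have "t = fls_const (1/r) * (fls_const r * t)" using r by (simp add: mult.assoc[symmetric])
    thus ?thesis unfolding g(1) by (simp add: fls_times_fps_to_fls)
  qed
  have "fps_const (1 / r) * g \<in> val_fps v"
    unfolding vfps_iff
  proof
    fix n
    have "v0 v g \<le> v (g $ n)" unfolding v0_def by (rule INF_lower) simp
    hence "v r \<le> v (g $ n)" using vg by simp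
    hence "g $ n / r \<in> val_ring v" by (rule ring_divI[OF r(2)])
    thus "(fps_const (1 / r) * g) $ n \<in> val_ring v" by simp
  qed
  thus ?thesis using tg unfolding RX_iff by blast
qed

end

lemma zspan_mono: "x \<in> zspan S \<Longrightarrow> S \<subseteq> S' \<Longrightarrow> x \<in> zspan S'"
  by (induction rule: zspan.induct) (auto intro: zspan.intros)

lemma zspan_finite: "x \<in> zspan S \<Longrightarrow> \<exists>S'. finite S' \<and> S' \<subseteq> S \<and> x \<in> zspan S'"
proof (induction rule: zspan.induct)
  case zspan_zero thus ?case by (intro exI[of _ "{}"]) (auto intro: zspan.intros)
next
  case (zspan_gen s) thus ?case by (intro exI[of _ "{s}"]) (auto intro: zspan.intros)
next
  case (zspan_diff a b)
  then obtain A B where "finite A" "A \<subseteq> S" "a \<in> zspan A" "finite B" "B \<subseteq> S" "b \<in> zspan B" by blast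
  thus ?case
    by (intro exI[of _ "A \<union> B"]) (auto intro: zspan.intros zspan_mono)
qed

locale modl =
  fixes R :: "'a::comm_ring_1 set" and Mc :: "'m::ab_group_add set" and sm :: "'a \<Rightarrow> 'm \<Rightarrow> 'm"
  assumes M: "module_on R Mc sm" and R0: "0 \<in> R" and R1: "1 \<in> R"
    and Radd: "\<And>a b. a \<in> R \<Longrightarrow> b \<in> R \<Longrightarrow> a + b \<in> R"
    and Rneg: "\<And>a. a \<in> R \<Longrightarrow> - a \<in> R"
    and Rmult: "\<And>a b. a \<in> R \<Longrightarrow> b \<in> R \<Longrightarrow> a * b \<in> R"
begin

lemma m0: "0 \<in> Mc" and madd: "x \<in> Mc \<Longrightarrow> y \<in> Mc \<Longrightarrow> x + y \<in> Mc"
  and mneg: "x \<in> Mc \<Longrightarrow> - x \<in> Mc" and msm: "r \<in> R \<Longrightarrow> x \<in> Mc \<Longrightarrow> sm r x \<in> Mc"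
  and sm_add: "r \<in> R \<Longrightarrow> x \<in> Mc \<Longrightarrow> y \<in> Mc \<Longrightarrow> sm r (x + y) = sm r x + sm r y"
  and sm_radd: "r \<in> R \<Longrightarrow> s \<in> R \<Longrightarrow> x \<in> Mc \<Longrightarrow> sm (r + s) x = sm r x + sm s x"
  and sm_mult: "r \<in> R \<Longrightarrow> s \<in> R \<Longrightarrow> x \<in> Mc \<Longrightarrow> sm (r * s) x = sm r (sm s x)"
  and sm_one: "x \<in> Mc \<Longrightarrow> sm 1 x = x"
  using M unfolding module_on_def by auto

lemma mdiff: "x \<in> Mc \<Longrightarrow> y \<in> Mc \<Longrightarrow> x - y \<in> Mc"
  using madd[of x "-y"] mneg[of y] by simp

lemma sm_zero: "r \<in> R \<Longrightarrow> sm r 0 = 0"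
  using sm_add[of r 0 0] m0 by simp

lemma sm_0: "x \<in> Mc \<Longrightarrow> sm 0 x = 0"
  using sm_radd[of 0 0 x] R0 by simp

lemma sm_neg: "r \<in> R \<Longrightarrow> x \<in> Mc \<Longrightarrow> sm r (- x) = - sm r x"
  using sm_add[of r x "-x"] mneg[of x] sm_zero[of r] by (simp add: eq_neg_iff_add_eq_0 add.commute)

lemma sm_diff: "r \<in> R \<Longrightarrow> x \<in> Mc \<Longrightarrow> y \<in> Mc \<Longrightarrow> sm r (x - y) = sm r x - sm r y"
  using sm_add[of r x "-y"] sm_neg[of r y] mneg[of y] by simp

lemma sm_rneg: "r \<in> R \<Longrightarrow> x \<in> Mc \<Longrightarrow> sm (- r) x = - sm r x"
  using sm_radd[of r "-r" x] Rneg[of r] sm_0[of x] by (simp add: eq_neg_iff_add_eq_0 add.commute)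

lemma sm_rdiff: "r \<in> R \<Longrightarrow> s \<in> R \<Longrightarrow> x \<in> Mc \<Longrightarrow> sm (r - s) x = sm r x - sm s x"
  using sm_radd[of r "-s" x] sm_rneg[of s x] Rneg[of s] by simp

definition lc :: "('m \<Rightarrow> 'a) \<Rightarrow> 'm set \<Rightarrow> 'm" where
  "lc c S = (\<Sum>x\<in>S. sm (c x) x)"

definition coef :: "'m set \<Rightarrow> ('m \<Rightarrow> 'a) \<Rightarrow> bool" where
  "coef S c \<longleftrightarrow> (\<forall>x\<in>S. c x \<in> R)"

lemma lc_in: "S \<subseteq> Mc \<Longrightarrow> coef S c \<Longrightarrow> lc c S \<in> Mc"
  unfolding lc_def coef_def
  by (induction S rule: infinite_finite_induct) (auto intro: m0 madd msm)

lemma lc_add: "S \<subseteq> Mc \<Longrightarrow> coef S c \<Longrightarrow> coef S d \<Longrightarrow> lc c S + lc d S = lc (\<lambda>x. c x + d x) S"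
  unfolding lc_def coef_def by (auto simp: sum.distrib[symmetric] sm_radd intro!: sum.cong)

lemma lc_diff: "S \<subseteq> Mc \<Longrightarrow> coef S c \<Longrightarrow> coef S d \<Longrightarrow> lc c S - lc d S = lc (\<lambda>x. c x - d x) S"
  unfolding lc_def coef_def by (auto simp: sum_subtractf[symmetric] sm_rdiff intro!: sum.cong)

lemma lc_sm: "S \<subseteq> Mc \<Longrightarrow> coef S c \<Longrightarrow> r \<in> R \<Longrightarrow> sm r (lc c S) = lc (\<lambda>x. r * c x) S"
  unfolding lc_def coef_def
proof (induction S rule: infinite_finite_induct)
  case (infinite A) thus ?case by (simp add: sm_zero)
next
  case empty thus ?case by (simp add: sm_zero)
next
  case (insert x F)
  have "sm r (sm (c x) x + (\<Sum>x\<in>F. sm (c x) x)) = sm r (sm (c x) x) + sm r (\<Sum>x\<in>F. sm (c x) x)"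
    using insert lc_in[of F c] unfolding lc_def coef_def by (intro sm_add) (auto intro: msm)
  thus ?case using insert by (simp add: sm_mult)
qed

lemma lc_zero: "S \<subseteq> Mc \<Longrightarrow> lc (\<lambda>x. 0) S = 0"
  unfolding lc_def by (auto simp: sm_0 intro!: sum.neutral)

lemma lc_cong: "(\<And>x. x \<in> S \<Longrightarrow> c x = d x) \<Longrightarrow> lc c S = lc d S"
  unfolding lc_def by simp

lemma lc_remove: "finite S \<Longrightarrow> j \<in> S \<Longrightarrow> lc c S = sm (c j) j + lc c (S - {j})"
  unfolding lc_def by (rule sum.remove)

end


locale vmod = valu v + modl "val_ring v" Mc sm
  for v :: "'a::field \<Rightarrow> ereal" and Mc :: "'m::ab_group_add set" and sm +
  fixes Nc :: "'m set"
  assumes N: "module_on (val_ring v) Nc sm" and NM: "Nc \<subseteq> Mc"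
    and tf: "\<And>r x. r \<in> val_ring v \<Longrightarrow> r \<noteq> 0 \<Longrightarrow> x \<in> Mc \<Longrightarrow> sm r x \<in> Nc \<Longrightarrow> x \<in> Nc"
begin

lemma n0: "0 \<in> Nc" and nadd: "x \<in> Nc \<Longrightarrow> y \<in> Nc \<Longrightarrow> x + y \<in> Nc"
  and nneg: "x \<in> Nc \<Longrightarrow> - x \<in> Nc" and nsm: "r \<in> val_ring v \<Longrightarrow> x \<in> Nc \<Longrightarrow> sm r x \<in> Nc"
  using N unfolding module_on_def by auto

lemma ndiff: "x \<in> Nc \<Longrightarrow> y \<in> Nc \<Longrightarrow> x - y \<in> Nc"
  using nadd[of x "-y"] nneg[of y] by simp

definition indep :: "'m set \<Rightarrow> bool" where
  "indep S \<longleftrightarrow> (\<forall>c. coef S c \<longrightarrow> lc c S \<in> Nc \<longrightarrow> (\<forall>x\<in>S. c x = 0))"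

definition spans :: "'m set \<Rightarrow> 'm set \<Rightarrow> bool" where
  "spans E S \<longleftrightarrow> finite S \<and> S \<subseteq> Mc \<and> (\<forall>e\<in>E. \<exists>n\<in>Nc. \<exists>c. coef S c \<and> e = n + lc c S)"

lemma spans_self: assumes "finite E" "E \<subseteq> Mc" shows "spans E E"
  unfolding spans_def
proof (intro conjI ballI assms)
  fix e assume e: "e \<in> E"
  define c where "c x = (if x = e then 1 else 0 :: 'a)" for x
  have cc: "coef E c" unfolding coef_def c_def using ring0 ring1 by auto
  have "lc c E = sm (c e) e + lc c (E - {e})" using lc_remove[OF assms(1) e] .
  also have "lc c (E - {e}) = lc (\<lambda>x. 0) (E - {e})" by (rule lc_cong) (simp add: c_def)
  also have "\<dots> = 0" using assms by (intro lc_zero) auto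
  finally have "lc c E = sm (c e) e" by simp
  also have "\<dots> = e" using sm_one[of e] e assms by (simp add: c_def subset_eq)
  finally have "lc c E = e" .
  thus "\<exists>n\<in>Nc. \<exists>c. coef E c \<and> e = n + lc c E" using n0 cc by (intro bexI[of _ 0] exI[of _ c]) auto
qed

lemma basis:
  assumes "finite E" "E \<subseteq> Mc"
  shows "\<exists>S. spans E S \<and> indep S"
proof -
  define k where "k = (LEAST k. \<exists>S. spans E S \<and> card S = k)"
  have ex: "\<exists>S. spans E S \<and> card S = card E" using spans_self[OF assms] by blast
  obtain S where S: "spans E S" "card S = k"
    using LeastI_ex[of "\<lambda>k. \<exists>S. spans E S \<and> card S = k"] ex unfolding k_def by blast
  have minimal: "k \<le> card S'" if "spans E S'" for S'
    unfolding k_def using that by (intro Least_le) blast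
  have Sfin: "finite S" and SM: "S \<subseteq> Mc" using S(1) by (auto simp: spans_def)
  have "indep S" unfolding indep_def
  proof (intro allI impI ballI, rule ccontr)
    fix c x0 assume cS: "coef S c" and lcN: "lc c S \<in> Nc" and x0: "x0 \<in> S" and cx0: "c x0 \<noteq> 0"
    define A where "A = {x \<in> S. c x \<noteq> 0}"
    have Afin: "finite A" and Ane: "A \<noteq> {}" using Sfin x0 cx0 by (auto simp: A_def)
    have "Min ((\<lambda>x. v (c x)) ` A) \<in> (\<lambda>x. v (c x)) ` A" using Afin Ane by (intro Min_in) auto
    then obtain j where j: "j \<in> A" "v (c j) = Min ((\<lambda>x. v (c x)) ` A)" by auto
    have jmin: "v (c j) \<le> v (c x)" if "x \<in> A" for x using j(2) Afin that by simp
    have jS: "j \<in> S" and cj: "c j \<noteq> 0" using j(1) by (auto simp: A_def)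
    have cjR: "c j \<in> val_ring v" using cS jS by (simp add: coef_def)
    define d where "d x = c x / c j" for x
    have dS: "coef S d" unfolding coef_def
    proof
      fix x assume x: "x \<in> S"
      show "d x \<in> val_ring v"
      proof (cases "c x = 0")
        case True thus ?thesis by (simp add: d_def ring0)
      next
        case False thus ?thesis unfolding d_def using jmin[of x] x cj by (intro ring_divI) (auto simp: A_def)
      qed
    qed
    have "sm (c j) (lc d S) = lc (\<lambda>x. c j * d x) S" using lc_sm[OF SM dS cjR] .
    also have "\<dots> = lc c S" by (rule lc_cong) (simp add: d_def cj)
    finally have "sm (c j) (lc d S) \<in> Nc" using lcN by simp
    hence yN: "lc d S \<in> Nc" using tf[OF cjR cj lc_in[OF SM dS]] by simp
    define y where "y = lc d S"
    define S' where "S' = S - {j}"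
    have S'M: "S' \<subseteq> Mc" and S'fin: "finite S'" using SM Sfin by (auto simp: S'_def)
    have dS': "coef S' d" using dS by (auto simp: coef_def S'_def)
    have "y = sm (d j) j + lc d S'" unfolding y_def S'_def by (rule lc_remove[OF Sfin jS])
    hence jy: "j = y - lc d S'" using sm_one[of j] jS SM cj by (auto simp: d_def)
    have "spans E S'" unfolding spans_def
    proof (intro conjI ballI S'M S'fin)
      fix e assume "e \<in> E"
      then obtain n c' where n: "n \<in> Nc" "coef S c'" "e = n + lc c' S" using S(1) by (auto simp: spans_def)
      have c'jR: "c' j \<in> val_ring v" using n(2) jS by (simp add: coef_def)
      have c'S': "coef S' c'" using n(2) by (auto simp: coef_def S'_def)
      have e1: "e = n + (sm (c' j) j + lc c' S')" unfolding n(3) S'_def by (simp add: lc_remove[OF Sfin jS])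
      have "sm (c' j) j = sm (c' j) (y - lc d S')"
        by (rule arg_cong[where f="sm (c' j)"], rule jy)
      also have "\<dots> = sm (c' j) y - sm (c' j) (lc d S')"
        using c'jR yN NM lc_in[OF S'M dS'] by (intro sm_diff) (auto simp: y_def)
      also have "sm (c' j) (lc d S') = lc (\<lambda>x. c' j * d x) S'" by (rule lc_sm[OF S'M dS' c'jR])
      finally have e2: "e = (n + sm (c' j) y) + (lc c' S' - lc (\<lambda>x. c' j * d x) S')"
        using e1 by (simp add: algebra_simps)
      have cf2: "coef S' (\<lambda>x. c' j * d x)" using dS' c'jR by (auto simp: coef_def intro: Rmult)
      have "lc c' S' - lc (\<lambda>x. c' j * d x) S' = lc (\<lambda>x. c' x - c' j * d x) S'"
        by (rule lc_diff[OF S'M c'S' cf2])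
      moreover have "coef S' (\<lambda>x. c' x - c' j * d x)" using c'S' cf2 by (auto simp: coef_def intro: ring_diff)
      moreover have "n + sm (c' j) y \<in> Nc" using n(1) c'jR yN by (auto simp: y_def intro: nadd nsm)
      ultimately show "\<exists>n\<in>Nc. \<exists>c. coef S' c \<and> e = n + lc c S'" using e2 by metis
    qed
    hence "k \<le> card S'" by (rule minimal)
    moreover have "card S' < card S"
    proof -
      have "card S > 0" using Sfin jS by (auto simp: card_gt_0_iff)
      thus ?thesis unfolding S'_def using Sfin jS by simp
    qed
    ultimately show False using S(2) by simp
  qed
  thus ?thesis using S by blast
qed

end

context vmod begin

lemma psi_exists:
  assumes "finite E" "E \<subseteq> Mc"
  shows "\<exists>\<psi> M'. E \<subseteq> M' \<and> (\<forall>n\<in>Nc. \<psi> n = n) \<and> (\<forall>z\<in>M'. \<psi> z \<in> Nc) \<and>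
     (\<forall>z\<in>M'. \<forall>w\<in>M'. z + w \<in> M' \<and> \<psi> (z + w) = \<psi> z + \<psi> w) \<and>
     (\<forall>r\<in>val_ring v. \<forall>z\<in>M'. sm r z \<in> M' \<and> \<psi> (sm r z) = sm r (\<psi> z))"
proof -
  obtain S where S: "spans E S" "indep S" using basis[OF assms] by blast
  have Sfin: "finite S" and SM: "S \<subseteq> Mc" using S(1) by (auto simp: spans_def)
  define M' where "M' = {n + lc c S | n c. n \<in> Nc \<and> coef S c}"
  define \<psi> where "\<psi> z = (THE n. n \<in> Nc \<and> (\<exists>c. coef S c \<and> z = n + lc c S))" for z
  have uniq: "n = n'" if "n \<in> Nc" "n' \<in> Nc" "coef S c" "coef S c'" "n + lc c S = n' + lc c' S" for n n' c c'
  proof -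
    have "lc c S - lc c' S = n' - n" using that(5) by (simp add: algebra_simps)
    hence "lc (\<lambda>x. c x - c' x) S \<in> Nc" using lc_diff[OF SM that(3,4)] ndiff[OF that(2,1)] by simp
    moreover have "coef S (\<lambda>x. c x - c' x)" using that(3,4) by (auto simp: coef_def intro: ring_diff)
    ultimately have "\<forall>x\<in>S. c x - c' x = 0" using S(2) unfolding indep_def by blast
    hence "lc c S = lc c' S" by (intro lc_cong) auto
    thus ?thesis using that(5) by simp
  qed
  have psi_eq: "\<psi> (n + lc c S) = n" if "n \<in> Nc" "coef S c" for n c
    unfolding \<psi>_def
  proof (rule the_equality)
    show "n \<in> Nc \<and> (\<exists>c'. coef S c' \<and> n + lc c S = n + lc c' S)" using that by blast
    fix n' assume "n' \<in> Nc \<and> (\<exists>c'. coef S c' \<and> n + lc c S = n' + lc c' S)"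
    then obtain c' where "n' \<in> Nc" "coef S c'" "n + lc c S = n' + lc c' S" by blast
    thus "n' = n" using uniq[of n' n c' c] that by simp
  qed
  have coef0: "coef S (\<lambda>x. 0)" by (simp add: coef_def ring0)
  show ?thesis
  proof (intro exI[of _ \<psi>] exI[of _ M'] conjI ballI)
    show "E \<subseteq> M'" using S(1) unfolding spans_def M'_def by blast
  next
    fix n assume n: "n \<in> Nc"
    show "\<psi> n = n" using psi_eq[OF n coef0] lc_zero[OF SM] by simp
  next
    fix z assume "z \<in> M'"
    then obtain n c where "n \<in> Nc" "coef S c" "z = n + lc c S" unfolding M'_def by blast
    thus "\<psi> z \<in> Nc" using psi_eq by simp
  next
    fix z w assume "z \<in> M'" "w \<in> M'"
    then obtain n c n' c' where a: "n \<in> Nc" "coef S c" "z = n + lc c S"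
      and b: "n' \<in> Nc" "coef S c'" "w = n' + lc c' S" unfolding M'_def by blast
    have cc: "coef S (\<lambda>x. c x + c' x)" using a(2) b(2) by (auto simp: coef_def intro: ring_add)
    have zw: "z + w = (n + n') + lc (\<lambda>x. c x + c' x) S"
      using lc_add[OF SM a(2) b(2)] a(3) b(3) by (simp add: algebra_simps)
    show "z + w \<in> M'" unfolding M'_def using zw cc nadd[OF a(1) b(1)] by blast
    show "\<psi> (z + w) = \<psi> z + \<psi> w" unfolding zw
      using psi_eq[OF nadd[OF a(1) b(1)] cc] psi_eq[OF a(1,2)] psi_eq[OF b(1,2)] a(3) b(3) by simp
  next
    fix r z assume r: "r \<in> val_ring v" and "z \<in> M'"
    then obtain n c where a: "n \<in> Nc" "coef S c" "z = n + lc c S" unfolding M'_def by blast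
    have cc: "coef S (\<lambda>x. r * c x)" using a(2) r by (auto simp: coef_def intro: ring_mult)
    have rz: "sm r z = sm r n + lc (\<lambda>x. r * c x) S"
      unfolding a(3) using sm_add[OF r, of n "lc c S"] NM a(1) lc_in[OF SM a(2)] lc_sm[OF SM a(2) r] by auto
    show "sm r z \<in> M'" unfolding M'_def using rz cc nsm[OF r a(1)] by blast
    show "\<psi> (sm r z) = sm r (\<psi> z)" unfolding rz
      using psi_eq[OF nsm[OF r a(1)] cc] psi_eq[OF a(1,2)] a(3) by simp
  qed
qed

end

definition push :: "('m \<Rightarrow> 'm) \<Rightarrow> ('m \<times> 'l) set \<Rightarrow> ('m \<times> 'l \<Rightarrow> int) \<Rightarrow> ('m \<times> 'l \<Rightarrow> int)" where
  "push \<psi> B g = (\<lambda>q. \<Sum>p\<in>B. if (\<psi> (fst p), snd p) = q then g p else 0)"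

lemma push_diff: "push \<psi> B (g - h) = push \<psi> B g - push \<psi> B h"
  unfolding push_def by (rule ext) (auto simp: sum_subtractf[symmetric] intro!: sum.cong)

lemma push_add: "push \<psi> B (g + h) = push \<psi> B g + push \<psi> B h"
  unfolding push_def by (rule ext) (auto simp: sum.distrib[symmetric] intro!: sum.cong)

lemma push_0: "push \<psi> B 0 = 0"
  unfolding push_def fun_eq_iff by (simp cong: if_cong)

lemma push_delta: assumes "finite B" "p \<in> B" shows "push \<psi> B (delta p) = delta (\<psi> (fst p), snd p)"
proof (rule ext)
  fix q
  have "push \<psi> B (delta p) q = (\<Sum>p'\<in>B. if p' = p then (if (\<psi> (fst p), snd p) = q then 1 else 0) else 0)"
    unfolding push_def delta_def by (rule sum.cong) auto
  also have "\<dots> = (if (\<psi> (fst p), snd p) = q then 1 else 0)" using assms by (simp add: sum.delta')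
  finally show "push \<psi> B (delta p) q = delta (\<psi> (fst p), snd p) q" by (auto simp: delta_def)
qed

lemma push_list: assumes "finite B" "set xs \<subseteq> B"
  shows "push \<psi> B (\<Sum>p\<leftarrow>xs. delta p) = (\<Sum>p\<leftarrow>xs. delta (\<psi> (fst p), snd p))"
  using assms(2)
proof (induction xs)
  case Nil thus ?case using push_0[of \<psi> B] by (simp add: zero_fun_def)
next
  case (Cons a xs)
  have IH: "push \<psi> B (\<Sum>p\<leftarrow>xs. delta p) = (\<Sum>p\<leftarrow>xs. delta (\<psi> (fst p), snd p))"
    using Cons by simp
  have pa: "push \<psi> B (delta a) = delta (\<psi> (fst a), snd a)" using Cons.prems push_delta[OF assms(1), of a \<psi>] by simp
  have "push \<psi> B (\<Sum>p\<leftarrow>a # xs. delta p) = push \<psi> B (delta a + (\<Sum>p\<leftarrow>xs. delta p))"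
    by (simp only: list.map sum_list.Cons)
  also have "\<dots> = push \<psi> B (delta a) + push \<psi> B (\<Sum>p\<leftarrow>xs. delta p)" by (rule push_add)
  also have "\<dots> = delta (\<psi> (fst a), snd a) + (\<Sum>p\<leftarrow>xs. delta (\<psi> (fst p), snd p))"
    by (simp only: pa IH)
  finally show ?case by (simp only: list.map sum_list.Cons)
qed

context vmod begin

definition rp :: "'l::ab_group_add set \<Rightarrow> ('a \<Rightarrow> 'l \<Rightarrow> 'l) \<Rightarrow> ('m \<times> 'l) set \<Rightarrow> ('m \<times> 'l \<Rightarrow> int) set" where
  "rp Lc sl A =
     {delta (m + m', l) - delta (m, l) - delta (m', l) | m m' l. m \<in> Mc \<and> m' \<in> Mc \<and> l \<in> Lc \<and>
        (m, l) \<in> A \<and> (m', l) \<in> A \<and> (m + m', l) \<in> A} \<union>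
     {delta (m, l + l') - delta (m, l) - delta (m, l') | m l l'. m \<in> Mc \<and> l \<in> Lc \<and> l' \<in> Lc \<and>
        (m, l) \<in> A \<and> (m, l') \<in> A \<and> (m, l + l') \<in> A} \<union>
     {delta (sm r m, l) - delta (m, sl r l) | r m l. r \<in> val_ring v \<and> m \<in> Mc \<and> l \<in> Lc \<and>
        (sm r m, l) \<in> A \<and> (m, sl r l) \<in> A}"

lemma rp_mono: "A \<subseteq> A' \<Longrightarrow> rp Lc sl A \<subseteq> rp Lc sl A'"
  unfolding rp_def by blast

lemma tr_cases:
  assumes "s \<in> tensor_rels R Mc sm Lc sl"
  obtains (a) m m' l where "s = delta (m + m', l) - delta (m, l) - delta (m', l)" "m \<in> Mc" "m' \<in> Mc" "l \<in> Lc"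
  | (b) m l l' where "s = delta (m, l + l') - delta (m, l) - delta (m, l')" "m \<in> Mc" "l \<in> Lc" "l' \<in> Lc"
  | (c) r m l where "s = delta (sm r m, l) - delta (m, sl r l)" "r \<in> R" "m \<in> Mc" "l \<in> Lc"
  using assms unfolding tensor_rels_def by (auto 0 0)

lemma rp_cases:
  assumes "s \<in> rp Lc sl A"
  obtains (a) m m' l where "s = delta (m + m', l) - delta (m, l) - delta (m', l)" "m \<in> Mc" "m' \<in> Mc" "l \<in> Lc"
        "(m, l) \<in> A" "(m', l) \<in> A" "(m + m', l) \<in> A"
  | (b) m l l' where "s = delta (m, l + l') - delta (m, l) - delta (m, l')" "m \<in> Mc" "l \<in> Lc" "l' \<in> Lc"
        "(m, l) \<in> A" "(m, l') \<in> A" "(m, l + l') \<in> A"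
  | (c) r m l where "s = delta (sm r m, l) - delta (m, sl r l)" "r \<in> val_ring v" "m \<in> Mc" "l \<in> Lc"
        "(sm r m, l) \<in> A" "(m, sl r l) \<in> A"
  using assms unfolding rp_def by (auto 0 0)

lemma rpI1: "m \<in> Mc \<Longrightarrow> m' \<in> Mc \<Longrightarrow> l \<in> Lc \<Longrightarrow> (m, l) \<in> A \<Longrightarrow> (m', l) \<in> A \<Longrightarrow> (m + m', l) \<in> A
  \<Longrightarrow> delta (m + m', l) - delta (m, l) - delta (m', l) \<in> rp Lc sl A"
  unfolding rp_def by (rule UnI1, rule UnI1, rule CollectI, rule exI[of _ m], rule exI[of _ m'], rule exI[of _ l]) simp

lemma rpI2: "m \<in> Mc \<Longrightarrow> l \<in> Lc \<Longrightarrow> l' \<in> Lc \<Longrightarrow> (m, l) \<in> A \<Longrightarrow> (m, l') \<in> A \<Longrightarrow> (m, l + l') \<in> A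
  \<Longrightarrow> delta (m, l + l') - delta (m, l) - delta (m, l') \<in> rp Lc sl A"
  unfolding rp_def by (rule UnI1, rule UnI2, rule CollectI, rule exI[of _ m], rule exI[of _ l], rule exI[of _ l']) simp

lemma rpI3: "r \<in> val_ring v \<Longrightarrow> m \<in> Mc \<Longrightarrow> l \<in> Lc \<Longrightarrow> (sm r m, l) \<in> A \<Longrightarrow> (m, sl r l) \<in> A
  \<Longrightarrow> delta (sm r m, l) - delta (m, sl r l) \<in> rp Lc sl A"
  unfolding rp_def by (rule UnI2, rule CollectI, rule exI[of _ r], rule exI[of _ m], rule exI[of _ l]) simp

lemma trI1: "m \<in> Nc \<Longrightarrow> m' \<in> Nc \<Longrightarrow> l \<in> Lc
  \<Longrightarrow> delta (m + m', l) - delta (m, l) - delta (m', l) \<in> tensor_rels R Nc sm Lc sl"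
  unfolding tensor_rels_def by (rule UnI1, rule UnI1, rule CollectI, rule exI[of _ m], rule exI[of _ m'], rule exI[of _ l]) simp

lemma trI2: "m \<in> Nc \<Longrightarrow> l \<in> Lc \<Longrightarrow> l' \<in> Lc
  \<Longrightarrow> delta (m, l + l') - delta (m, l) - delta (m, l') \<in> tensor_rels R Nc sm Lc sl"
  unfolding tensor_rels_def by (rule UnI1, rule UnI2, rule CollectI, rule exI[of _ m], rule exI[of _ l], rule exI[of _ l']) simp

lemma trI3: "r \<in> R \<Longrightarrow> m \<in> Nc \<Longrightarrow> l \<in> Lc
  \<Longrightarrow> delta (sm r m, l) - delta (m, sl r l) \<in> tensor_rels R Nc sm Lc sl"
  unfolding tensor_rels_def by (rule UnI2, rule CollectI, rule exI[of _ r], rule exI[of _ m], rule exI[of _ l]) simp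

lemma pts:
  assumes "finite S'" "S' \<subseteq> tensor_rels (val_ring v) Mc sm Lc sl"
  shows "\<exists>A. finite A \<and> fst ` A \<subseteq> Mc \<and> S' \<subseteq> rp Lc sl A"
  using assms
proof (induction S' rule: finite_induct)
  case empty thus ?case by (intro exI[of _ "{}"]) auto
next
  case (insert s F)
  then obtain A where A: "finite A" "fst ` A \<subseteq> Mc" "F \<subseteq> rp Lc sl A" by auto
  have s: "s \<in> tensor_rels (val_ring v) Mc sm Lc sl" using insert by auto
  have ext: "\<exists>A. finite A \<and> fst ` A \<subseteq> Mc \<and> insert s F \<subseteq> rp Lc sl A"
    if "finite P" "fst ` P \<subseteq> Mc" "s \<in> rp Lc sl (A \<union> P)" for P
  proof (intro exI conjI)
    show "finite (A \<union> P)" using A(1) that(1) by simp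
    show "fst ` (A \<union> P) \<subseteq> Mc" using A(2) that(2) by auto
    show "insert s F \<subseteq> rp Lc sl (A \<union> P)" using that(3) A(3) rp_mono[of A "A \<union> P" Lc sl] by blast
  qed
  from s show ?case
  proof (cases rule: tr_cases)
    case (a m m' l)
    show ?thesis by (rule ext[of "{(m, l), (m', l), (m + m', l)}"]) (use a in \<open>auto intro!: rpI1 madd\<close>)
  next
    case (b m l l')
    show ?thesis by (rule ext[of "{(m, l), (m, l'), (m, l + l')}"]) (use b in \<open>auto intro!: rpI2\<close>)
  next
    case (c r m l)
    show ?thesis by (rule ext[of "{(sm r m, l), (m, sl r l)}"]) (use c in \<open>auto intro!: rpI3 msm\<close>)
  qed
qed

theorem pure:
  fixes Lc :: "'l::ab_group_add set" and sl
  shows "tensor_map_injective (val_ring v) Nc Mc sm Lc sl"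
  unfolding tensor_map_injective_def tensor_zero_def
proof (intro allI impI)
  fix xs :: "('m \<times> 'l) list"
  assume xs: "set xs \<subseteq> Nc \<times> Lc" and z: "(\<Sum>p\<leftarrow>xs. delta p) \<in> zspan (tensor_rels (val_ring v) Mc sm Lc sl)"
  obtain S' where S': "finite S'" "S' \<subseteq> tensor_rels (val_ring v) Mc sm Lc sl" "(\<Sum>p\<leftarrow>xs. delta p) \<in> zspan S'"
    using zspan_finite[OF z] by blast
  obtain A where A: "finite A" "fst ` A \<subseteq> Mc" "S' \<subseteq> rp Lc sl A" using pts[OF S'(1,2)] by blast
  obtain \<psi> M' where P: "fst ` A \<subseteq> M'" "\<forall>n\<in>Nc. \<psi> n = n" "\<forall>z\<in>M'. \<psi> z \<in> Nc"
     "\<forall>z\<in>M'. \<forall>w\<in>M'. z + w \<in> M' \<and> \<psi> (z + w) = \<psi> z + \<psi> w"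
     "\<forall>r\<in>val_ring v. \<forall>z\<in>M'. sm r z \<in> M' \<and> \<psi> (sm r z) = sm r (\<psi> z)"
    using psi_exists[of "fst ` A"] A(1,2) by blast
  define B where "B = A \<union> set xs"
  have Bfin: "finite B" using A(1) by (simp add: B_def)
  have AB: "A \<subseteq> B" by (simp add: B_def)
  have inA: "m \<in> M'" if "(m, l) \<in> A" for m l using P(1) that by force
  have gen: "push \<psi> B s \<in> zspan (tensor_rels (val_ring v) Nc sm Lc sl)" if "s \<in> S'" for s
  proof -
    have s: "s \<in> rp Lc sl A" using that A(3) by blast
    have pd: "push \<psi> B (delta (x, y)) = delta (\<psi> x, y)" if "(x, y) \<in> A" for x y
      using push_delta[OF Bfin, of "(x, y)" \<psi>] AB that by auto
    from s have "push \<psi> B s \<in> tensor_rels (val_ring v) Nc sm Lc sl"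
    proof (cases rule: rp_cases)
      case (a m m' l)
      have mm: "m \<in> M'" "m' \<in> M'" using inA a by auto
      have "push \<psi> B s = delta (\<psi> (m + m'), l) - delta (\<psi> m, l) - delta (\<psi> m', l)"
        unfolding a(1) push_diff by (simp only: pd a(5-7))
      also have "\<psi> (m + m') = \<psi> m + \<psi> m'" using P(4) mm by blast
      finally show ?thesis using P(3) mm a(4) by (simp only:) (rule trI1, auto)
    next
      case (b m l l')
      have mm: "m \<in> M'" using inA b by auto
      have "push \<psi> B s = delta (\<psi> m, l + l') - delta (\<psi> m, l) - delta (\<psi> m, l')"
        unfolding b(1) push_diff by (simp only: pd b(5-7))
      thus ?thesis using P(3) mm b(3,4) by (simp only:) (rule trI2, auto)
    next
      case (c r m l)
      have mm: "m \<in> M'" using inA c by auto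
      have "push \<psi> B s = delta (\<psi> (sm r m), l) - delta (\<psi> m, sl r l)"
        unfolding c(1) push_diff by (simp only: pd c(5-6))
      also have "\<psi> (sm r m) = sm r (\<psi> m)" using P(5) mm c(2) by blast
      finally show ?thesis using P(3) mm c(2,4) by (simp only:) (rule trI3, auto)
    qed
    thus ?thesis by (rule zspan_gen)
  qed
  have all: "push \<psi> B g \<in> zspan (tensor_rels (val_ring v) Nc sm Lc sl)" if "g \<in> zspan S'" for g
    using that
  proof (induction rule: zspan.induct)
    case zspan_zero show ?case by (subst push_0) (rule zspan.zspan_zero)
  next
    case (zspan_gen s) thus ?case by (rule gen)
  next
    case (zspan_diff a b) show ?case by (subst push_diff) (rule zspan.zspan_diff[OF zspan_diff.IH])
  qed
  have "push \<psi> B (\<Sum>p\<leftarrow>xs. delta p) = (\<Sum>p\<leftarrow>xs. delta (\<psi> (fst p), snd p))"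
    by (rule push_list[OF Bfin]) (simp add: B_def)
  also have "\<dots> = (\<Sum>p\<leftarrow>xs. delta p)"
  proof -
    have "map (\<lambda>p. delta (\<psi> (fst p), snd p)) xs = map delta xs"
      using xs P(2) by (intro map_cong) auto
    thus ?thesis by (rule arg_cong[where f=sum_list])
  qed
  finally show "(\<Sum>p\<leftarrow>xs. delta p) \<in> zspan (tensor_rels (val_ring v) Nc sm Lc sl)"
    using all[OF S'(3)] by simp
qed

end

lemma fam_iff: "f \<in> fam_prod I A \<longleftrightarrow> (\<forall>i\<in>I. f i \<in> A) \<and> (\<forall>i. i \<notin> I \<longrightarrow> f i = 0)"
  by (simp add: fam_prod_def)

lemma module_fam:
  fixes R :: "'a::field set" and I :: "'i set"
  assumes M: "module_on R A fls_smult"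
  shows "module_on R (fam_prod I A) fam_smult"
proof -
  have m: "0 \<in> A" "\<And>x y. x \<in> A \<Longrightarrow> y \<in> A \<Longrightarrow> x + y \<in> A" "\<And>x. x \<in> A \<Longrightarrow> - x \<in> A"
    "\<And>r x. r \<in> R \<Longrightarrow> x \<in> A \<Longrightarrow> fls_const r * x \<in> A"
    using M unfolding module_on_def fls_smult_def by auto
  show ?thesis
    unfolding module_on_def fam_smult_def
  proof (intro conjI ballI)
    show "0 \<in> fam_prod I A" using m(1) by (simp add: fam_iff)
  next
    fix x y assume "x \<in> fam_prod I A" "y \<in> fam_prod I A"
    thus "x + y \<in> fam_prod I A" using m(2) by (simp add: fam_iff)
  next
    fix x assume "x \<in> fam_prod I A"
    thus "- x \<in> fam_prod I A" using m(3) by (simp add: fam_iff)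
  next
    fix r x assume "r \<in> R" "x \<in> fam_prod I A"
    thus "(\<lambda>i. fls_const r * x i) \<in> fam_prod I A" using m(4) by (simp add: fam_iff)
  next
    fix r :: 'a and x y :: "'i \<Rightarrow> 'a fls" show "(\<lambda>i. fls_const r * (x + y) i) = (\<lambda>i. fls_const r * x i) + (\<lambda>i. fls_const r * y i)"
      by (rule ext) (simp only: plus_fun_apply distrib_left)
  next
    fix r s :: 'a and x :: "'i \<Rightarrow> 'a fls" show "(\<lambda>i. fls_const (r + s) * x i) = (\<lambda>i. fls_const r * x i) + (\<lambda>i. fls_const s * x i)"
      by (simp add: fun_eq_iff distrib_right fls_plus_const[symmetric])
  next
    fix r s :: 'a and x :: "'i \<Rightarrow> 'a fls" show "(\<lambda>i. fls_const (r * s) * x i) = (\<lambda>i. fls_const r * (fls_const s * x i))"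
      by (simp add: fun_eq_iff mult.assoc[symmetric])
  next
    fix x :: "'i \<Rightarrow> 'a fls" show "(\<lambda>i. fls_const 1 * x i) = x" by (simp add: fun_eq_iff)
  qed
qed

context valu begin

lemma modl_inst: "module_on (val_ring v) Mc sm \<Longrightarrow> modl (val_ring v) Mc sm"
  by (unfold_locales) (auto intro: ring0 ring1 ring_add ring_neg ring_mult)

lemma part1: "tensor_map_injective (val_ring v) (RX_set v) (T_set v) fls_smult Lc sl"
proof -
  interpret vmod v "T_set v" fls_smult "RX_set v"
  proof -
    show "vmod v (T_set v) fls_smult (RX_set v)"
      unfolding vmod_def vmod_axioms_def
      using V module_T module_RX RX_T torsion_free modl_inst[OF module_T]
      by (auto simp: valu_def fls_smult_def)
  qed
  show ?thesis by (rule pure)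
qed

lemma fam_sub: "fam_prod I (RX_set v) \<subseteq> fam_prod I (T_set v)"
proof
  fix x assume "x \<in> fam_prod I (RX_set v)"
  thus "x \<in> fam_prod I (T_set v)" using RX_T unfolding fam_iff by blast
qed

lemma part2: "tensor_map_injective (val_ring v) (fam_prod I (RX_set v)) (fam_prod I (T_set v)) fam_smult Lc sl"
proof -
  have MT: "module_on (val_ring v) (fam_prod I (T_set v)) fam_smult" by (rule module_fam[OF module_T])
  have MR: "module_on (val_ring v) (fam_prod I (RX_set v)) fam_smult" by (rule module_fam[OF module_RX])
  have sub: "fam_prod I (RX_set v) \<subseteq> fam_prod I (T_set v)"
  proof
    fix x assume "x \<in> fam_prod I (RX_set v)"
    thus "x \<in> fam_prod I (T_set v)" using RX_T unfolding fam_iff by blast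
  qed
  have tf: "x \<in> fam_prod I (RX_set v)"
    if "r \<in> val_ring v" "r \<noteq> 0" "x \<in> fam_prod I (T_set v)" "fam_smult r x \<in> fam_prod I (RX_set v)" for r x
    using that torsion_free[OF that(1,2)] by (auto simp: fam_iff fam_smult_def)
  interpret vmod v "fam_prod I (T_set v)" fam_smult "fam_prod I (RX_set v)"
    unfolding vmod_def vmod_axioms_def
    using V MT MR sub tf modl_inst[OF MT] by (auto simp: valu_def)
  show ?thesis by (rule pure)
qed

end

theorem proposition4p2:
  fixes v :: "'a::field \<Rightarrow> ereal" and I :: "'i set"
  assumes "valuation v"
    and "value_group v \<noteq> UNIV"
    and "dense_in_reals (value_group v)"
  shows "submodule_on (val_ring v) (RX_set v) (T_set v) fls_smult \<and>
         (\<forall>(Lc :: 'l::ab_group_add set) sl. module_on (val_ring v) Lc sl \<longrightarrow>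
            tensor_map_injective (val_ring v) (RX_set v) (T_set v) fls_smult Lc sl) \<and>
         submodule_on (val_ring v) (fam_prod I (RX_set v)) (fam_prod I (T_set v)) fam_smult \<and>
         (\<forall>(Lc :: 'l::ab_group_add set) sl. module_on (val_ring v) Lc sl \<longrightarrow>
            tensor_map_injective (val_ring v) (fam_prod I (RX_set v)) (fam_prod I (T_set v)) fam_smult Lc sl)"
proof -
  interpret valu v by unfold_locales (rule assms(1))
  have s1: "submodule_on (val_ring v) (RX_set v) (T_set v) fls_smult"
    unfolding submodule_on_def using RX_T module_T module_RX by blast
  have s2: "submodule_on (val_ring v) (fam_prod I (RX_set v)) (fam_prod I (T_set v)) fam_smult"
    unfolding submodule_on_def using fam_sub module_fam[OF module_T] module_fam[OF module_RX] by blast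
  show ?thesis using s1 s2 part1 part2 by blast
qed

end
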